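(* Let $a,b\in\mathbb{C}$ with $a\neq0$, $\Re(b)>0$, $\Re(b+a)>0$, $\Re(b-a)>0$, $\frac32\pm\frac{a}{2b}\notin\mathbb{Z}_0^-$ and $\frac ab\notin\{\pm1,\pm3,\pm5,\dots\}$. Then $$ {}_3F_2\!\left(\begin{matrix}1,\ \frac12-\frac{a}{2b},\ \frac12+\frac{a}{2b}\\ \frac32-\frac{a}{2b},\ \frac32+\frac{a}{2b}\end{matrix};\,-1\right) =\frac{b^2-a^2}{2ab}\left[\frac\pi2\sec\!\Big(\frac{\pi a}{2b}\Big)-\beta\!\Big(\frac{a+b}{2b}\Big)\right] =\frac{b^2-a^2}{8ab}\left[\Psi\!\Big(\frac{3b-a}{4b}\Big)-\Psi\!\Big(\frac{b-a}{4b}\Big)-\Psi\!\Big(\frac{3b+a}{4b}\Big)+\Psi\!\Big(\frac{b+a}{4b}\Big)\right]. $$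
   Context: $\mathbb{Z}_0^-=\{0,-1,-2,\dots\}$. The Pochhammer symbol is $(\lambda)_0=1$, $(\lambda)_n=\lambda(\lambda+1)\cdots(\lambda+n-1)$ for $n\ge1$. The generalized hypergeometric series is ${}_pF_q\!\left(\begin{matrix}\alpha_1,\dots,\alpha_p\\ \beta_1,\dots,\beta_q\end{matrix};z\right)=\sum_{n=0}^\infty\frac{(\alpha_1)_n\cdots(\alpha_p)_n}{(\beta_1)_n\cdots(\beta_q)_n}\frac{z^n}{n!}$ (with no $\beta_j\in\mathbb{Z}_0^-$). The (lower case) beta function of one variable is $\beta(x)=\sum_{k=0}^\infty\frac{(-1)^k}{k+x}$ for $x\in\mathbb{C}\setminus\mathbb{Z}_0^-$. $\Psi=\Gamma'/\Gamma$ is the digamma function. *)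

theory Defs
  imports "HOL-Analysis.Analysis"
begin

definition hyp_term :: "complex list \<Rightarrow> complex list \<Rightarrow> complex \<Rightarrow> nat \<Rightarrow> complex" where
  "hyp_term as bs z n =
     (\<Prod>a\<leftarrow>as. pochhammer a n) / (\<Prod>b\<leftarrow>bs. pochhammer b n) * z ^ n / of_nat (fact n)"

definition hypergeom :: "complex list \<Rightarrow> complex list \<Rightarrow> complex \<Rightarrow> complex" where
  "hypergeom as bs z = (\<Sum>n. hyp_term as bs z n)"

definition beta1 :: "complex \<Rightarrow> complex" where
  "beta1 x = (\<Sum>k. (-1) ^ k / (of_nat k + x))"

end

theory Submission
  imports Defs
begin

lemma Digamma_refl:
  fixes z :: complex assumes z: "z \<notin> \<int>"
  shows "Digamma (1 - z) - Digamma z = of_real pi * cot (of_real pi * z)"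
proof -
  have z1: "z \<notin> \<int>\<^sub>\<le>\<^sub>0" using z nonpos_Ints_subset_Ints by blast
  have z2: "1 - z \<notin> \<int>\<^sub>\<le>\<^sub>0" using z nonpos_Ints_subset_Ints Ints_diff[of 1 "1-z"] by auto
  have s: "sin (of_real pi * z) \<noteq> 0" using z by (subst sin_eq_0) auto
  have eq: "(\<lambda>z. Gamma z * Gamma (1 - z)) = (\<lambda>z::complex. of_real pi / sin (of_real pi * z))"
    using Gamma_reflection_complex by blast
  have d1: "((\<lambda>z. Gamma z * Gamma (1 - z)) has_field_derivative
      Gamma z * Digamma z * Gamma (1 - z) + Gamma z * (Gamma (1 - z) * Digamma (1 - z) * (-1))) (at z)"
    using z1 z2 by (auto intro!: derivative_eq_intros)
  have d2: "((\<lambda>z::complex. of_real pi / sin (of_real pi * z)) has_field_derivative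
      - (of_real pi * (cos (of_real pi * z) * of_real pi)) / (sin (of_real pi * z))^2) (at z)"
    using s by (auto intro!: derivative_eq_intros simp: power2_eq_square)
  have "Gamma z * Digamma z * Gamma (1 - z) + Gamma z * (Gamma (1 - z) * Digamma (1 - z) * (-1))
      = - (of_real pi * (cos (of_real pi * z) * of_real pi)) / (sin (of_real pi * z))^2"
    using DERIV_unique[OF d1 d2[folded eq]] .
  then have "(Gamma z * Gamma (1 - z)) * (Digamma z - Digamma (1 - z))
      = - (of_real pi * (cos (of_real pi * z) * of_real pi)) / (sin (of_real pi * z))^2"
    by (simp add: algebra_simps)
  then have "of_real pi / sin (of_real pi * z) * (Digamma z - Digamma (1 - z))
      = - (of_real pi * (cos (of_real pi * z) * of_real pi)) / (sin (of_real pi * z))^2"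
    by (simp only: Gamma_reflection_complex)
  then have "Digamma z - Digamma (1 - z) = (- (of_real pi * (cos (of_real pi * z) * of_real pi)) / (sin (of_real pi * z))^2) / (of_real pi / sin (of_real pi * z))"
    using s by (metis (no_types, lifting) divide_eq_0_iff nonzero_mult_div_cancel_left of_real_eq_0_iff pi_gt_zero less_irrefl)
  also have "\<dots> = - of_real pi * cot (of_real pi * z)"
    using s by (simp add: cot_def field_simps power2_eq_square)
  finally show ?thesis by (simp add: algebra_simps)
qed

lemma my_limseq_even_odd:
  assumes "(\<lambda>n. f (2 * n)) \<longlonglongrightarrow> (l :: 'a :: topological_space)"
      and "(\<lambda>n. f (2 * n + 1)) \<longlonglongrightarrow> l"
  shows "f \<longlonglongrightarrow> l"
  unfolding tendsto_def
proof (intro allI impI)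
  fix S assume S: "open S" "l \<in> S"
  from assms(1) S obtain n1 where n1: "\<And>n. n \<ge> n1 \<Longrightarrow> f (2*n) \<in> S"
    unfolding tendsto_def eventually_sequentially by blast
  from assms(2) S obtain n2 where n2: "\<And>n. n \<ge> n2 \<Longrightarrow> f (2*n+1) \<in> S"
    unfolding tendsto_def eventually_sequentially by blast
  show "\<forall>\<^sub>F n in sequentially. f n \<in> S"
    unfolding eventually_sequentially
  proof (intro exI allI impI)
    fix n assume "2*n1 + 2*n2 + 1 \<le> n"
    then show "f n \<in> S"
      by (cases "even n") (auto elim!: evenE oddE intro!: n1 n2)
  qed
qed

lemma Digamma_sums':
  fixes z :: complex assumes "z \<noteq> 0"
  shows "(\<lambda>j. inverse (of_nat (Suc j)) - inverse (z + of_nat j)) sums (Digamma z + euler_mascheroni)"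
  using summable_Digamma[OF assms] by (simp add: Digamma_def summable_sums)

lemma beta_sums:
  fixes x :: complex assumes x0: "x \<noteq> 0" and x1: "x \<noteq> -1"
  shows "(\<lambda>k. (-1)^k / (of_nat k + x)) sums ((Digamma ((x+1)/2) - Digamma (x/2))/2)"
proof -
  define f where "f k = (-1)^k / (of_nat k + x)" for k
  define g where "g j = 1 / (2 * of_nat j + x) - 1 / (2 * of_nat j + 1 + x)" for j
  have a: "x/2 \<noteq> 0" using x0 by simp
  have b: "(x+1)/2 \<noteq> 0" using x1 by (auto simp: add_eq_0_iff minus_equation_iff[of x])
  have inv: "inverse (y/2 + of_nat j) = 2 / (y + 2 * of_nat j)" for y :: complex and j :: nat
  proof -
    have "y/2 + of_nat j = (y + 2 * of_nat j) / 2" by (simp add: field_simps)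
    then show ?thesis by (metis inverse_divide)
  qed
  have "(\<lambda>j. ((inverse (of_nat (Suc j)) - inverse ((x+1)/2 + of_nat j)) -
              (inverse (of_nat (Suc j)) - inverse (x/2 + of_nat j))) / 2)
        sums (((Digamma ((x+1)/2) + euler_mascheroni) - (Digamma (x/2) + euler_mascheroni)) / 2)"
    by (intro sums_divide sums_diff Digamma_sums' a b)
  also have "(\<lambda>j. ((inverse (of_nat (Suc j)) - inverse ((x+1)/2 + of_nat j)) -
              (inverse (of_nat (Suc j)) - inverse (x/2 + of_nat j))) / 2) = g"
  proof
    fix j
    have "inverse ((x+1)/2 + of_nat j) = 2 / (x + 1 + 2 * of_nat j)" by (rule inv)
    moreover have "inverse (x/2 + of_nat j) = 2 / (x + 2 * of_nat j)" by (rule inv)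
    ultimately show "((inverse (of_nat (Suc j)) - inverse ((x+1)/2 + of_nat j)) -
              (inverse (of_nat (Suc j)) - inverse (x/2 + of_nat j))) / 2 = g j"
      by (simp add: g_def add_ac)
  qed
  finally have gs: "g sums ((Digamma ((x+1)/2) - Digamma (x/2))/2)" by simp
  have part: "(\<Sum>k<2*n. f k) = (\<Sum>j<n. g j)" for n
    by (induction n) (simp_all add: f_def g_def add_ac)
  have ev: "(\<lambda>n. sum f {..<2*n}) \<longlonglongrightarrow> (Digamma ((x+1)/2) - Digamma (x/2))/2"
    using gs unfolding sums_def part .
  have z: "(\<lambda>k. inverse (x + of_nat k)) \<longlonglongrightarrow> 0"
    by (intro filterlim_compose[OF tendsto_inverse_0]
              tendsto_add_filterlim_at_infinity[OF tendsto_const] tendsto_of_nat)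
  have "(\<lambda>n. inverse (x + of_nat (2*n))) \<longlonglongrightarrow> 0"
    using filterlim_compose[OF z filterlim_subseq[of "\<lambda>n. 2*n"]] by (simp add: strict_mono_def o_def)
  then have "(\<lambda>n. f (2*n)) \<longlonglongrightarrow> 0"
    by (simp add: f_def divide_inverse add.commute)
  from tendsto_add[OF ev this] have od: "(\<lambda>n. sum f {..<2*n+1}) \<longlonglongrightarrow> (Digamma ((x+1)/2) - Digamma (x/2))/2"
    by simp
  show ?thesis unfolding sums_def f_def[symmetric]
    by (rule my_limseq_even_odd[OF ev od])
qed

lemma aux_frac:
  fixes A B d X Y s :: complex
  assumes "A \<noteq> 0" "B \<noteq> 0" "d \<noteq> 0"
  shows "X / A * (Y / B) * s = X * Y / d * (s * d / (A * B))"
  using assms by (simp add: field_simps)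

lemma poch_ratio:
  fixes x :: complex
  assumes "pochhammer (x+1) n \<noteq> 0" "x + of_nat n \<noteq> 0"
  shows "pochhammer x n / pochhammer (x+1) n = x / (x + of_nat n)"
proof -
  have "pochhammer x n * (x + of_nat n) = x * pochhammer (x+1) n"
    using pochhammer_Suc[of x n] pochhammer_rec[of x n] by simp
  then show ?thesis using assms by (simp add: field_simps)
qed

lemma cot_sum:
  fixes p :: complex
  assumes "sin p \<noteq> 0" "cos p \<noteq> 0"
  shows "cot p + cot (of_real pi/2 - p) = 2 / sin (2*p)"
proof -
  have "cot (of_real pi/2 - p) = sin p / cos p"
    by (simp add: cot_def sin_cos_eq[of p] cos_sin_eq[of p])
  then have "cot p + cot (of_real pi/2 - p) = cos p / sin p + sin p / cos p" by (simp add: cot_def)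
  also have "\<dots> = 1 / (sin p * cos p)" using assms by (simp add: field_simps power2_eq_square[symmetric])
  also have "\<dots> = 2 / sin (2*p)" by (simp add: sin_double)
  finally show ?thesis .
qed

theorem mainTheorem10:
  fixes a b :: complex
  assumes "a \<noteq> 0"
    and "Re b > 0" and "Re (b + a) > 0" and "Re (b - a) > 0"
    and "\<forall>n::nat. 3/2 + a / (2*b) \<noteq> - of_nat n"
    and "\<forall>n::nat. 3/2 - a / (2*b) \<noteq> - of_nat n"
    and "\<forall>k::int. a / b \<noteq> 2 * of_int k + 1"
  shows "hypergeom [1, 1/2 - a/(2*b), 1/2 + a/(2*b)] [3/2 - a/(2*b), 3/2 + a/(2*b)] (-1)
           = (b^2 - a^2) / (2*a*b) *
               (of_real pi / 2 * (1 / cos (of_real pi * a / (2*b))) - beta1 ((a + b) / (2*b)))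
       \<and> (b^2 - a^2) / (2*a*b) *
               (of_real pi / 2 * (1 / cos (of_real pi * a / (2*b))) - beta1 ((a + b) / (2*b)))
           = (b^2 - a^2) / (8*a*b) *
               (Digamma ((3*b - a) / (4*b)) - Digamma ((b - a) / (4*b))
                - Digamma ((3*b + a) / (4*b)) + Digamma ((b + a) / (4*b)))"
proof -
  note H7 = assms(7)
  have b0: "b \<noteq> 0" using assms(2) by auto
  define t where "t = a / b"
  have odd: False if "t = 2 * of_int k + 1" for k :: int
    using H7 that unfolding t_def by blast
  define c where "c = a / (2*b)"
  have ct: "c = t/2" unfolding c_def t_def by simp
  define xm where "xm = 1/2 - c"
  define xp where "xp = 1/2 + c"
  have xm0: "xm \<noteq> 0" using odd[of 0] by (auto simp: xm_def ct field_simps add_eq_0_iff minus_equation_iff[of t])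
  have xm1: "xm \<noteq> -1" using odd[of 1] by (auto simp: xm_def ct field_simps add_eq_0_iff minus_equation_iff[of t])
  have xp0: "xp \<noteq> 0" using odd[of "-1"] by (auto simp: xp_def ct field_simps add_eq_0_iff minus_equation_iff[of t])
  have xp1: "xp \<noteq> -1" using odd[of "-2"] by (auto simp: xp_def ct field_simps add_eq_0_iff minus_equation_iff[of t])
  have xmn: "xm + of_nat n \<noteq> 0" for n
    using odd[of "int n"] by (auto simp: xm_def ct field_simps add_eq_0_iff minus_equation_iff[of t])
  have xpn: "xp + of_nat n \<noteq> 0" for n
    using odd[of "- int n - 1"] by (auto simp: xp_def ct field_simps add_eq_0_iff minus_equation_iff[of t])
  have pm: "pochhammer (xm+1) n \<noteq> 0" for n
    using assms(6) unfolding pochhammer_eq_0_iff xm_def c_def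
    by (auto simp: add_ac diff_add_eq)
  have pp: "pochhammer (xp+1) n \<noteq> 0" for n
    using assms(5) unfolding pochhammer_eq_0_iff xp_def c_def
    by (auto simp: add_ac)
  have e1: "(xm+1)/2 = (3*b - a)/(4*b)" using b0 by (simp add: xm_def c_def field_simps)
  have e2: "xm/2 = (b - a)/(4*b)" using b0 by (simp add: xm_def c_def field_simps)
  have e3: "(xp+1)/2 = (3*b + a)/(4*b)" using b0 by (simp add: xp_def c_def field_simps)
  have e4: "xp/2 = (b + a)/(4*b)" using b0 by (simp add: xp_def c_def field_simps)
  have e5: "(a + b)/(2*b) = xp" using b0 by (simp add: xp_def c_def field_simps)
  define Dm where "Dm = Digamma ((3*b - a) / (4*b)) - Digamma ((b - a) / (4*b))"
  define Dp where "Dp = Digamma ((3*b + a) / (4*b)) - Digamma ((b + a) / (4*b))"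
  have Bm: "(\<lambda>k. (-1)^k / (of_nat k + xm)) sums (Dm/2)"
    using beta_sums[OF xm0 xm1] unfolding e1 e2 Dm_def .
  have Bp: "(\<lambda>k. (-1)^k / (of_nat k + xp)) sums (Dp/2)"
    using beta_sums[OF xp0 xp1] unfolding e3 e4 Dp_def .
  have beta: "beta1 ((a + b)/(2*b)) = Dp/2"
    unfolding e5 beta1_def using Bp by (simp add: sums_iff)
  define K where "K = xm * xp / (xp - xm)"
  have dxx: "xp - xm = t" by (simp add: xp_def xm_def ct)
  have t0: "t \<noteq> 0" using assms(1) b0 by (simp add: t_def)
  have hterm: "hyp_term [1, 1/2 - a/(2*b), 1/2 + a/(2*b)] [3/2 - a/(2*b), 3/2 + a/(2*b)] (-1) n
      = K * ((-1)^n / (of_nat n + xm) - (-1)^n / (of_nat n + xp))" for n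
  proof -
    have "hyp_term [1, 1/2 - a/(2*b), 1/2 + a/(2*b)] [3/2 - a/(2*b), 3/2 + a/(2*b)] (-1) n
        = hyp_term [1, xm, xp] [xm+1, xp+1] (-1) n"
      by (simp add: xm_def xp_def c_def)
    also have "\<dots> = (pochhammer 1 n / fact n) * (pochhammer xm n / pochhammer (xm+1) n)
        * (pochhammer xp n / pochhammer (xp+1) n) * (-1)^n"
      by (simp add: hyp_term_def mult_ac)
    also have "\<dots> = xm / (xm + of_nat n) * (xp / (xp + of_nat n)) * (-1)^n"
      using pm pp xmn xpn by (simp add: poch_ratio flip: pochhammer_fact)
    also have "\<dots> = K * ((-1)^n / (of_nat n + xm) - (-1)^n / (of_nat n + xp))"
    proof -
      have A: "of_nat n + xm \<noteq> 0" using xmn[of n] by (simp add: add.commute)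
      have B: "of_nat n + xp \<noteq> 0" using xpn[of n] by (simp add: add.commute)
      have d: "xp - xm \<noteq> 0" using dxx t0 by simp
      have eq: "(-1)^n / (of_nat n + xm) - (-1)^n / (of_nat n + xp)
          = (-1)^n * (xp - xm) / ((of_nat n + xm) * (of_nat n + xp))"
        using A B by (simp add: field_simps)
      have "xm / (xm + of_nat n) * (xp / (xp + of_nat n)) * (-1)^n
          = xm * xp / (xp - xm) * ((-1)^n * (xp - xm) / ((xm + of_nat n) * (xp + of_nat n)))"
        by (rule aux_frac[OF xmn xpn d])
      then show ?thesis unfolding eq K_def by (simp add: add.commute)
    qed
    finally show ?thesis .
  qed
  have "(hyp_term [1, 1/2 - a/(2*b), 1/2 + a/(2*b)] [3/2 - a/(2*b), 3/2 + a/(2*b)] (-1))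
      sums (K * (Dm/2 - Dp/2))"
    unfolding hterm by (intro sums_mult sums_diff Bm Bp)
  then have hyp: "hypergeom [1, 1/2 - a/(2*b), 1/2 + a/(2*b)] [3/2 - a/(2*b), 3/2 + a/(2*b)] (-1)
      = K * (Dm/2 - Dp/2)"
    unfolding hypergeom_def by (simp add: sums_iff)
  have K: "K = (b^2 - a^2) / (4*a*b)"
    unfolding K_def dxx using b0 assms(1) by (simp add: xm_def xp_def ct t_def field_simps power2_eq_square)
  define u where "u = (b + a)/(4*b)"
  define v where "v = (b - a)/(4*b)"
  have u1: "1 - u = (3*b - a)/(4*b)" using b0 by (simp add: u_def field_simps)
  have v1: "1 - v = (3*b + a)/(4*b)" using b0 by (simp add: v_def field_simps)
  have uI: "u \<notin> \<int>"
  proof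
    assume "u \<in> \<int>" then obtain k where "u = of_int k" by (auto elim: Ints_cases)
    then have "t = 2 * of_int (2*k - 1) + 1" using b0 by (simp add: u_def t_def field_simps)
    then show False by (rule odd)
  qed
  have vI: "v \<notin> \<int>"
  proof
    assume "v \<in> \<int>" then obtain k where "v = of_int k" by (auto elim: Ints_cases)
    then have "t = 2 * of_int (- 2*k) + 1" using b0 by (simp add: v_def t_def field_simps)
    then show False by (rule odd)
  qed
  have sumD: "Dm + Dp = of_real pi * cot (of_real pi * u) + of_real pi * cot (of_real pi * v)"
  proof -
    have "Dm + Dp = (Digamma (1 - u) - Digamma u) + (Digamma (1 - v) - Digamma v)"
      unfolding Dm_def Dp_def u1[symmetric] v1[symmetric] u_def[symmetric] v_def[symmetric]
      by (simp add: algebra_simps)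
    then show ?thesis unfolding Digamma_refl[OF uI] Digamma_refl[OF vI] .
  qed
  have su: "sin (of_real pi * u) \<noteq> 0" using uI by (subst sin_eq_0) auto
  have sv: "sin (of_real pi * v) \<noteq> 0" using vI by (subst sin_eq_0) auto
  have pv: "of_real pi * v = of_real pi / 2 - of_real pi * u"
    using b0 by (simp add: u_def v_def field_simps)
  have cu: "cos (of_real pi * u) \<noteq> 0" using sv unfolding pv by (simp add: cos_sin_eq[symmetric]) 
  have "2 * (of_real pi * u) = of_real pi/2 - (- (of_real pi * a / (2*b)))"
    using b0 by (simp add: u_def field_simps)
  then have s2: "sin (2 * (of_real pi * u)) = cos (of_real pi * a / (2*b))"
    by (simp only: cos_sin_eq[symmetric] cos_minus)
  have cc: "cos (of_real pi * a / (2*b)) \<noteq> 0"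
  proof
    assume "cos (of_real pi * a / (2*b)) = 0"
    then obtain n :: int where "of_real pi * a / (2*b) = complex_of_real (n * pi) + of_real pi / 2"
      by (auto simp: cos_eq_0)
    then have "of_real pi * t = of_real pi * (2 * of_int n + 1)" using b0 by (simp add: t_def field_simps)
    then have "t = 2 * of_int n + 1" by simp
    then show False by (rule odd)
  qed
  have DD: "Dm + Dp = 2 * of_real pi / cos (of_real pi * a / (2*b))"
    unfolding sumD pv using cot_sum[OF su cu] s2 by (simp add: distrib_left[symmetric])
  have part2: "(b^2 - a^2) / (2*a*b) *
               (of_real pi / 2 * (1 / cos (of_real pi * a / (2*b))) - beta1 ((a + b) / (2*b)))
           = (b^2 - a^2) / (8*a*b) *
               (Digamma ((3*b - a) / (4*b)) - Digamma ((b - a) / (4*b))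
                - Digamma ((3*b + a) / (4*b)) + Digamma ((b + a) / (4*b)))"
  proof -
    have E: "of_real pi / 2 * (1 / cos (of_real pi * a / (2*b))) = (Dm + Dp)/4"
      unfolding DD using cc by simp
    have "(b^2 - a^2) / (2*a*b) *
               (of_real pi / 2 * (1 / cos (of_real pi * a / (2*b))) - beta1 ((a + b) / (2*b)))
        = (b^2 - a^2) / (8*a*b) * (Dm - Dp)"
      unfolding beta E using b0 assms(1) by (simp add: field_simps)
    then show ?thesis by (simp add: Dm_def Dp_def algebra_simps)
  qed
  have part1: "hypergeom [1, 1/2 - a/(2*b), 1/2 + a/(2*b)] [3/2 - a/(2*b), 3/2 + a/(2*b)] (-1)
      = (b^2 - a^2) / (8*a*b) *
               (Digamma ((3*b - a) / (4*b)) - Digamma ((b - a) / (4*b))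
                - Digamma ((3*b + a) / (4*b)) + Digamma ((b + a) / (4*b)))"
    unfolding hyp K Dm_def Dp_def using b0 assms(1) by (simp add: field_simps)
  show ?thesis using part1 part2 by simp
qed

end
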